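(* Let $X=\ell_2(\mathbb N)$ (complex), with unit vectors $e_k$, and let $(\lambda_k)_{k\ge1}$ be real numbers with $0<\lambda_1<\lambda_2<\cdots$ and $\lambda_k\to\infty$. Define $Ax=\sum_{k\ge1}-\lambda_k\langle x,e_k\rangle e_k$ on $D(A)=\{x\in\ell_2:\sum_k-\lambda_k\langle x,e_k\rangle e_k\text{ converges in }\ell_2\}$, and let $B\in L(\mathbb C^m,X_{-1})$. Then the system $\dot x=Ax+Bu$ with inputs $u\in L^\infty(\mathbb R_+,\mathbb C^m)$ is ISS, and $$V(x)=-\operatorname{Re}\langle A^{-1}x,x\rangle=\sum_{k=1}^\infty\frac{1}{\lambda_k}|\langle x,e_k\rangle|^2$$ is a non-coercive ISS Lyapunov function for it.
   Context: $X_{-1}$ is the completion of $X$ with respect to $\|x\|_{X_{-1}}=\|(\beta I-A)^{-1}x\|_X$ for some $\beta$ in the resolvent set of $A$; $(T_{-1}(t))$ extends the semigroup $(T(t))$ generated by $A$ to $X_{-1}$. The mild solution is $\phi(t,x_0,u)=T(t)x_0+\int_0^tT_{-1}(t-s)Bu(s)ds$. ISS: there are $\beta\in\mathcal{KL}$, $\gamma\in\mathcal K$ with $\|\phi(t,x_0,u)\|\le\beta(\|x_0\|,t)+\gamma(\|u\|_\infty)$ for all $x_0,u,t\ge0$. $\dot V_u(x)=\limsup_{t\to+0}\frac1t(V(\phi(t,x,u))-V(x))$; a continuous $V:X\to\mathbb R_+$ is a non-coercive ISS Lyapunov function if there exist $\psi_2,\alpha\in\mathcal K_\infty$, $\sigma\in\mathcal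 K$ with $0<V(x)\le\psi_2(\|x\|)$ for $x\ne0$ and $\dot V_u(x)\le-\alpha(\|x\|)+\sigma(\|u\|_\infty)$ for all $x,u$. $\mathcal K$ = continuous strictly increasing $\gamma:\mathbb R_+\to\mathbb R_+$ with $\gamma(0)=0$; $\mathcal K_\infty$ = unbounded elements of $\mathcal K$; $\mathcal{KL}$ = $\beta:\mathbb R_+^2\to\mathbb R_+$ with $\beta(\cdot,t)\in\mathcal K$ and $\beta(r,\cdot)$ continuous strictly decreasing to $0$ for $r>0$. *)

theory Defs
  imports "HOL-Analysis.Analysis" "HOL-Probability.Essential_Supremum"
begin

definition l2 :: "(nat \<Rightarrow> complex) set" where
  "l2 = {x. summable (\<lambda>k. (cmod (x k))\<^sup>2)}"

definition l2norm :: "(nat \<Rightarrow> complex) \<Rightarrow> real" where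
  "l2norm x = sqrt (\<Sum>k. (cmod (x k))\<^sup>2)"

definition l2inner :: "(nat \<Rightarrow> complex) \<Rightarrow> (nat \<Rightarrow> complex) \<Rightarrow> complex" where
  "l2inner x y = (\<Sum>k. x k * cnj (y k))"

definition opA :: "(nat \<Rightarrow> real) \<Rightarrow> (nat \<Rightarrow> complex) \<Rightarrow> (nat \<Rightarrow> complex)" where
  "opA lam x = (\<lambda>k. - complex_of_real (lam k) * x k)"

definition domA :: "(nat \<Rightarrow> real) \<Rightarrow> (nat \<Rightarrow> complex) set" where
  "domA lam = {x \<in> l2. \<exists>y\<in>l2.
     (\<lambda>n. l2norm (\<lambda>k. (if k < n then - complex_of_real (lam k) * x k else 0) - y k))
       \<longlonglongrightarrow> 0}"

text \<open>Extrapolation space X_{-1}, the completion of X w.r.t. the norm ||A^{-1} x||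
  (beta = 0 lies in the resolvent set), realised as sequences with
  sum_k |x_k|^2 / lam_k^2 finite.\<close>

definition Xm1 :: "(nat \<Rightarrow> real) \<Rightarrow> (nat \<Rightarrow> complex) set" where
  "Xm1 lam = {x. summable (\<lambda>k. (cmod (x k))\<^sup>2 / (lam k)\<^sup>2)}"

text \<open>B in L(C^m, X_{-1}) is given by the images b j = B e_j in X_{-1};
  (B v)_k = sum_j v_j (b j)_k.\<close>

definition opB :: "('m::finite \<Rightarrow> nat \<Rightarrow> complex) \<Rightarrow> complex^'m \<Rightarrow> (nat \<Rightarrow> complex)" where
  "opB b v = (\<lambda>k. \<Sum>j\<in>UNIV. v $ j * b j k)"

definition Linf :: "(real \<Rightarrow> complex^'m::finite) set" where
  "Linf = {u. u \<in> borel_measurable (restrict_space lborel {0..}) \<and>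
              esssup (restrict_space lborel {0..}) (\<lambda>t. ereal (norm (u t))) < \<infinity>}"

definition linf_norm :: "(real \<Rightarrow> complex^'m::finite) \<Rightarrow> real" where
  "linf_norm u = real_of_ereal (esssup (restrict_space lborel {0..}) (\<lambda>t. ereal (norm (u t))))"

text \<open>Mild solution phi(t,x0,u) = T(t) x0 + int_0^t T_{-1}(t-s) B u(s) ds, written
  coordinatewise (the coordinate functionals are continuous on X_{-1}, and T(t), T_{-1}(t)
  act diagonally by exp(-lam_k t)).\<close>

definition phi :: "(nat \<Rightarrow> real) \<Rightarrow> ('m::finite \<Rightarrow> nat \<Rightarrow> complex) \<Rightarrow> real
                    \<Rightarrow> (nat \<Rightarrow> complex) \<Rightarrow> (real \<Rightarrow> complex^'m) \<Rightarrow> (nat \<Rightarrow> complex)" where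
  "phi lam b t x0 u = (\<lambda>k. complex_of_real (exp (- lam k * t)) * x0 k
      + (LINT s:{0..t}|lborel. complex_of_real (exp (- lam k * (t - s))) * opB b (u s) k))"

definition classK :: "(real \<Rightarrow> real) \<Rightarrow> bool" where
  "classK g \<longleftrightarrow> continuous_on {0..} g \<and> strict_mono_on {0..} g \<and> g 0 = 0"

definition classKinf :: "(real \<Rightarrow> real) \<Rightarrow> bool" where
  "classKinf g \<longleftrightarrow> classK g \<and> (\<forall>M. \<exists>r\<ge>0. g r > M)"

definition classKL :: "(real \<Rightarrow> real \<Rightarrow> real) \<Rightarrow> bool" where
  "classKL \<beta> \<longleftrightarrow> (\<forall>t\<ge>0. classK (\<lambda>r. \<beta> r t)) \<and>
     (\<forall>r>0. continuous_on {0..} (\<beta> r) \<and>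
            (\<forall>s t. 0 \<le> s \<longrightarrow> s < t \<longrightarrow> \<beta> r t < \<beta> r s) \<and>
            (\<beta> r \<longlongrightarrow> 0) at_top)"

definition ISS :: "(nat \<Rightarrow> real) \<Rightarrow> ('m::finite \<Rightarrow> nat \<Rightarrow> complex) \<Rightarrow> bool" where
  "ISS lam b \<longleftrightarrow> (\<exists>\<beta> \<gamma>. classKL \<beta> \<and> classK \<gamma> \<and>
     (\<forall>x0\<in>l2. \<forall>u\<in>Linf. \<forall>t\<ge>0.
        phi lam b t x0 u \<in> l2 \<and>
        l2norm (phi lam b t x0 u) \<le> \<beta> (l2norm x0) t + \<gamma> (linf_norm u)))"

definition Vdot :: "(nat \<Rightarrow> real) \<Rightarrow> ('m::finite \<Rightarrow> nat \<Rightarrow> complex) \<Rightarrow> ((nat \<Rightarrow> complex) \<Rightarrow> real)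
                    \<Rightarrow> (real \<Rightarrow> complex^'m) \<Rightarrow> (nat \<Rightarrow> complex) \<Rightarrow> ereal" where
  "Vdot lam b V u x = Limsup (at_right 0) (\<lambda>t. ereal ((V (phi lam b t x u) - V x) / t))"

definition ncISS_LF :: "(nat \<Rightarrow> real) \<Rightarrow> ('m::finite \<Rightarrow> nat \<Rightarrow> complex) \<Rightarrow> ((nat \<Rightarrow> complex) \<Rightarrow> real) \<Rightarrow> bool" where
  "ncISS_LF lam b V \<longleftrightarrow>
     (\<forall>x\<in>l2. 0 \<le> V x) \<and>
     (\<forall>x\<in>l2. \<forall>\<epsilon>>0. \<exists>\<delta>>0. \<forall>y\<in>l2. l2norm (\<lambda>k. y k - x k) < \<delta> \<longrightarrow> \<bar>V y - V x\<bar> < \<epsilon>) \<and>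
     (\<exists>\<psi>2 \<alpha> \<sigma>. classKinf \<psi>2 \<and> classKinf \<alpha> \<and> classK \<sigma> \<and>
        (\<forall>x\<in>l2. x \<noteq> (\<lambda>k. 0) \<longrightarrow> 0 < V x \<and> V x \<le> \<psi>2 (l2norm x)) \<and>
        (\<forall>x\<in>l2. \<forall>u\<in>(Linf :: (real \<Rightarrow> complex^'m) set).
            Vdot lam b V u x \<le> ereal (- \<alpha> (l2norm x) + \<sigma> (linf_norm u))))"

end

theory Submission
  imports Defs "HOL-Real_Asymp.Real_Asymp"
begin


lemma cs_sum:
  fixes a b :: "nat \<Rightarrow> real"
  assumes a: "summable (\<lambda>k. (a k)\<^sup>2)" and b: "summable (\<lambda>k. (b k)\<^sup>2)"
  shows "summable (\<lambda>k. \<bar>a k\<bar> * \<bar>b k\<bar>)"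
    and "(\<Sum>k. \<bar>a k\<bar> * \<bar>b k\<bar>) \<le> sqrt (\<Sum>k. (a k)\<^sup>2) * sqrt (\<Sum>k. (b k)\<^sup>2)"
proof -
  have key: "\<bar>a k\<bar> * \<bar>b k\<bar> \<le> (s * (a k)\<^sup>2 + (b k)\<^sup>2 / s) / 2" if "s > 0" for s k
  proof -
    have "0 \<le> (s * \<bar>a k\<bar> - \<bar>b k\<bar>)\<^sup>2" by simp
    then have "2 * s * (\<bar>a k\<bar> * \<bar>b k\<bar>) \<le> s\<^sup>2 * (a k)\<^sup>2 + (b k)\<^sup>2"
      by (simp add: power2_eq_square algebra_simps)
    then show ?thesis using that by (simp add: field_simps power2_eq_square)
  qed
  have sumab: "summable (\<lambda>k. (s * (a k)\<^sup>2 + (b k)\<^sup>2 / s) / 2)" for s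
    by (intro summable_divide summable_add summable_mult a b)
  show S: "summable (\<lambda>k. \<bar>a k\<bar> * \<bar>b k\<bar>)"
    by (rule summable_comparison_test[OF _ sumab[of 1]]) (use key[of 1] in auto)
  define A where "A = (\<Sum>k. (a k)\<^sup>2)"
  define B where "B = (\<Sum>k. (b k)\<^sup>2)"
  have A0: "A \<ge> 0" "B \<ge> 0" unfolding A_def B_def by (auto intro!: suminf_nonneg a b)
  have bnd: "(\<Sum>k. \<bar>a k\<bar> * \<bar>b k\<bar>) \<le> (s * A + B / s) / 2" if "s > 0" for s
  proof -
    have "(\<Sum>k. \<bar>a k\<bar> * \<bar>b k\<bar>) \<le> (\<Sum>k. (s * (a k)\<^sup>2 + (b k)\<^sup>2 / s) / 2)"
      by (rule suminf_le) (use key[OF that] S sumab in auto)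
    also have "\<dots> = (s * A + B / s) / 2"
      unfolding A_def B_def
      by (intro sums_unique[symmetric] sums_divide sums_add sums_mult summable_sums a b)
    finally show ?thesis .
  qed
  show "(\<Sum>k. \<bar>a k\<bar> * \<bar>b k\<bar>) \<le> sqrt A * sqrt B"
  proof (cases "A = 0 \<or> B = 0")
    case True
    then have "(\<forall>k. a k = 0) \<or> (\<forall>k. b k = 0)"
      using suminf_eq_zero_iff[OF a] suminf_eq_zero_iff[OF b] unfolding A_def B_def by auto
    then show ?thesis using A0 by auto
  next
    case False
    then have p: "A > 0" "B > 0" using A0 by auto
    have "(\<Sum>k. \<bar>a k\<bar> * \<bar>b k\<bar>) \<le> (sqrt B / sqrt A * A + B / (sqrt B / sqrt A)) / 2"
      using bnd[of "sqrt B / sqrt A"] p by auto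
    also have "\<dots> = sqrt A * sqrt B"
      using p by (simp add: field_simps)
    finally show ?thesis .
  qed
qed

lemma tri_sum:
  fixes a b :: "nat \<Rightarrow> real"
  assumes a: "summable (\<lambda>k. (a k)\<^sup>2)" and b: "summable (\<lambda>k. (b k)\<^sup>2)"
  shows "summable (\<lambda>k. (a k + b k)\<^sup>2)"
    and "sqrt (\<Sum>k. (a k + b k)\<^sup>2) \<le> sqrt (\<Sum>k. (a k)\<^sup>2) + sqrt (\<Sum>k. (b k)\<^sup>2)"
proof -
  have pw: "(a k + b k)\<^sup>2 \<le> (a k)\<^sup>2 + 2 * (\<bar>a k\<bar> * \<bar>b k\<bar>) + (b k)\<^sup>2" for k
    by (simp add: power2_eq_square algebra_simps) (metis abs_ge_self abs_mult mult.commute)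
  have s2: "summable (\<lambda>k. (a k)\<^sup>2 + 2 * (\<bar>a k\<bar> * \<bar>b k\<bar>) + (b k)\<^sup>2)"
    by (intro summable_add summable_mult cs_sum(1) a b)
  show S: "summable (\<lambda>k. (a k + b k)\<^sup>2)"
    by (rule summable_comparison_test[OF _ s2]) (use pw in auto)
  have "(\<Sum>k. (a k + b k)\<^sup>2) \<le> (\<Sum>k. (a k)\<^sup>2 + 2 * (\<bar>a k\<bar> * \<bar>b k\<bar>) + (b k)\<^sup>2)"
    by (rule suminf_le[OF pw S s2])
  also have "\<dots> = (\<Sum>k. (a k)\<^sup>2) + 2 * (\<Sum>k. \<bar>a k\<bar> * \<bar>b k\<bar>) + (\<Sum>k. (b k)\<^sup>2)"
    by (intro sums_unique[symmetric] sums_add sums_mult summable_sums a b cs_sum(1))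
  also have "\<dots> \<le> (\<Sum>k. (a k)\<^sup>2) + 2 * (sqrt (\<Sum>k. (a k)\<^sup>2) * sqrt (\<Sum>k. (b k)\<^sup>2)) + (\<Sum>k. (b k)\<^sup>2)"
    using cs_sum(2)[OF a b] by linarith
  also have "\<dots> = (sqrt (\<Sum>k. (a k)\<^sup>2) + sqrt (\<Sum>k. (b k)\<^sup>2))\<^sup>2"
    using suminf_nonneg[OF a] suminf_nonneg[OF b]
    by (simp add: power2_eq_square algebra_simps)
  finally show "sqrt (\<Sum>k. (a k + b k)\<^sup>2) \<le> sqrt (\<Sum>k. (a k)\<^sup>2) + sqrt (\<Sum>k. (b k)\<^sup>2)"
    by (metis real_sqrt_abs real_sqrt_le_mono abs_of_nonneg real_sqrt_ge_zero add_nonneg_nonneg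
        suminf_nonneg[OF a] suminf_nonneg[OF b] zero_le_power2)
qed

lemma sum_sq_summable:
  fixes f :: "'j \<Rightarrow> nat \<Rightarrow> real"
  assumes "finite S" "\<forall>j\<in>S. summable (\<lambda>k. (f j k)\<^sup>2)"
  shows "summable (\<lambda>k. (\<Sum>j\<in>S. f j k)\<^sup>2)"
  using assms
proof (induction S rule: finite_induct)
  case empty then show ?case by simp
next
  case (insert x F)
  then show ?case by (simp add: tri_sum(1))
qed

lemma ereal_le_real_aux: "ereal x \<le> E \<Longrightarrow> E < \<infinity> \<Longrightarrow> x \<le> real_of_ereal E"
  by (cases E) auto

lemma linf_AE:
  assumes "u \<in> Linf"
  shows "AE s in lborel. s \<ge> 0 \<longrightarrow> norm (u s) \<le> linf_norm u"
proof -
  have "AE s in restrict_space lborel {0..}. ereal (norm (u s)) \<le> esssup (restrict_space lborel {0..}) (\<lambda>t. ereal (norm (u t)))"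
    by (rule esssup_AE)
  then have "AE s in lborel. s \<in> {0..} \<longrightarrow> ereal (norm (u s)) \<le> esssup (restrict_space lborel {0..}) (\<lambda>t. ereal (norm (u t)))"
    by (subst (asm) AE_restrict_space_iff) auto
  moreover have f: "esssup (restrict_space lborel {0..}) (\<lambda>t. ereal (norm (u t))) < \<infinity>"
    using assms unfolding Linf_def by auto
  ultimately show ?thesis
    unfolding linf_norm_def
    by (elim eventually_mono) (auto intro: ereal_le_real_aux)
qed

lemma not_AE_neg: "\<not> (AE s in lborel. (s::real) < 0)"
proof
  assume "AE s in lborel. (s::real) < 0"
  then have "emeasure lborel {s::real. \<not> s < 0} = 0"
    by (subst (asm) AE_iff_measurable[of "{s. \<not> s < 0}"]) auto
  moreover have "{s::real. \<not> s < 0} = {0..}" by auto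
  moreover have "emeasure lborel {0..1::real} \<le> emeasure lborel {0::real..}"
    by (rule emeasure_mono) auto
  ultimately show False by simp
qed

lemma linf_nonneg:
  assumes "u \<in> Linf" shows "0 \<le> linf_norm u"
proof (rule ccontr)
  assume "\<not> 0 \<le> linf_norm u"
  then have "AE s in lborel. (s::real) < 0"
    using linf_AE[OF assms] by (elim eventually_mono) (metis norm_ge_zero not_le order_trans)
  then show False using not_AE_neg by simp
qed



lemma exp_integral:
  fixes l t :: real
  assumes "l > 0" "t \<ge> 0"
  shows "(LBINT s:{0..t}. exp (- l * (t - s))) = (1 - exp (- l * t)) / l"
proof -
  have "(LBINT s:{0..t}. exp (- l * (t - s))) = (LBINT s=ereal 0..ereal t. exp (- l * (t - s)))"
    by (rule interval_integral_Icc[OF assms(2), symmetric])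
  also have "\<dots> = exp (- l * (t - t)) / l - exp (- l * (t - 0)) / l"
  proof (rule interval_integral_FTC_finite)
    show "continuous_on {min 0 t..max 0 t} (\<lambda>s. exp (- l * (t - s)))"
      by (intro continuous_intros)
    fix x assume "min 0 t \<le> x" "x \<le> max 0 t"
    show "((\<lambda>s. exp (- l * (t - s)) / l) has_vector_derivative exp (- l * (t - x))) (at x within {min 0 t..max 0 t})"
      unfolding has_real_derivative_iff_has_vector_derivative[symmetric]
      using assms by (auto intro!: derivative_eq_intros)
  qed
  also have "\<dots> = (1 - exp (- l * t)) / l" by (simp add: diff_divide_distrib)
  finally show ?thesis .
qed

lemma w_bound:
  fixes g :: "complex^'m::finite \<Rightarrow> complex"
  assumes u: "u \<in> Linf" and t: "t \<ge> 0" and l: "l > 0" and c: "c \<ge> 0"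
    and gb: "\<And>v. cmod (g v) \<le> norm v * c"
  shows "cmod (LINT s:{0..t}|lborel. complex_of_real (exp (- l * (t - s))) * g (u s))
           \<le> linf_norm u * c * ((1 - exp (- l * t)) / l)"
proof -
  define U where "U = linf_norm u"
  have U0: "U \<ge> 0" unfolding U_def by (rule linf_nonneg[OF u])
  have int: "integrable lborel (\<lambda>s. indicator {0..t} s * exp (- l * (t - s)))"
  proof -
    have "set_integrable lborel {0..t} (\<lambda>s. exp (- l * (t - s)))"
      by (intro borel_integrable_atLeastAtMost' continuous_intros)
    then show ?thesis by (simp add: set_integrable_def)
  qed
  have "cmod (LINT s:{0..t}|lborel. complex_of_real (exp (- l * (t - s))) * g (u s))
      \<le> integral\<^sup>L lborel (\<lambda>s. norm (indicator {0..t} s *\<^sub>R (complex_of_real (exp (- l * (t - s))) * g (u s))))"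
    unfolding set_lebesgue_integral_def by (rule integral_norm_bound)
  also have "\<dots> \<le> integral\<^sup>L lborel (\<lambda>s. indicator {0..t} s * exp (- l * (t - s)) * (U * c))"
  proof (rule integral_mono_AE')
    show "integrable lborel (\<lambda>s. indicator {0..t} s * exp (- l * (t - s)) * (U * c))"
      using int by simp
    show "AE s in lborel. 0 \<le> indicator {0..t} s * exp (- l * (t - s)) * (U * c)"
      using U0 c by auto
    show "AE s in lborel. norm (indicator {0..t} s *\<^sub>R (complex_of_real (exp (- l * (t - s))) * g (u s)))
        \<le> indicator {0..t} s * exp (- l * (t - s)) * (U * c)"
      using linf_AE[OF u]
    proof (elim eventually_mono)
      fix s assume h: "0 \<le> s \<longrightarrow> norm (u s) \<le> linf_norm u"
      show "norm (indicator {0..t} s *\<^sub>R (complex_of_real (exp (- l * (t - s))) * g (u s)))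
        \<le> indicator {0..t} s * exp (- l * (t - s)) * (U * c)"
      proof (cases "s \<in> {0..t}")
        case True
        then have "norm (u s) \<le> U" using h U_def by auto
        then have "cmod (g (u s)) \<le> U * c" using gb[of "u s"] c
          by (meson mult_right_mono order_trans)
        then show ?thesis using True by (simp add: norm_mult)
      qed simp
    qed
  qed
  also have "\<dots> = (LBINT s:{0..t}. exp (- l * (t - s))) * (U * c)"
    by (simp add: set_lebesgue_integral_def)
  also have "\<dots> = U * c * ((1 - exp (- l * t)) / l)"
    using exp_integral[OF l t] by simp
  finally show ?thesis unfolding U_def .
qed



definition cc :: "('m::finite \<Rightarrow> nat \<Rightarrow> complex) \<Rightarrow> nat \<Rightarrow> real" where
  "cc b k = (\<Sum>j\<in>UNIV. cmod (b j k))"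

definition wint :: "(nat \<Rightarrow> real) \<Rightarrow> ('m::finite \<Rightarrow> nat \<Rightarrow> complex) \<Rightarrow> real
                    \<Rightarrow> (real \<Rightarrow> complex^'m) \<Rightarrow> nat \<Rightarrow> complex" where
  "wint lam b t u k = (LINT s:{0..t}|lborel. complex_of_real (exp (- lam k * (t - s))) * opB b (u s) k)"

lemma phi_eq: "phi lam b t x u k = complex_of_real (exp (- lam k * t)) * x k + wint lam b t u k"
  by (simp add: phi_def wint_def)

lemma cc_nonneg: "0 \<le> cc b k"
  unfolding cc_def by (intro sum_nonneg) auto

lemma opB_bound: "cmod (opB b v k) \<le> norm v * cc b k"
proof -
  have "cmod (opB b v k) \<le> (\<Sum>j\<in>UNIV. cmod (v $ j * b j k))"
    unfolding opB_def by (rule norm_sum)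
  also have "\<dots> \<le> (\<Sum>j\<in>UNIV. norm v * cmod (b j k))"
    by (intro sum_mono) (simp add: norm_mult mult_right_mono Finite_Cartesian_Product.norm_nth_le del: norm_mult_numeral1 norm_mult_numeral2)
  also have "\<dots> = norm v * cc b k" unfolding cc_def by (simp add: sum_distrib_left)
  finally show ?thesis .
qed

lemma l2_sq: assumes "x \<in> l2" shows "(l2norm x)\<^sup>2 = (\<Sum>k. (cmod (x k))\<^sup>2)"
proof -
  have "summable (\<lambda>k. (cmod (x k))\<^sup>2)" using assms unfolding l2_def by simp
  then have "0 \<le> (\<Sum>k. (cmod (x k))\<^sup>2)" by (rule suminf_nonneg) simp
  then show ?thesis unfolding l2norm_def by simp
qed

lemma l2norm_nonneg: "x \<in> l2 \<Longrightarrow> 0 \<le> l2norm x"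
  unfolding l2norm_def by (rule real_sqrt_ge_zero, rule suminf_nonneg) (auto simp: l2_def)

context
  fixes lam :: "nat \<Rightarrow> real" and b :: "'m::finite \<Rightarrow> nat \<Rightarrow> complex"
  assumes lam0: "0 < lam 0" and smono: "strict_mono lam" and bX: "\<forall>j. b j \<in> Xm1 lam"
begin

lemma lam_ge: "lam 0 \<le> lam k"
  using strict_mono_mono[OF smono] by (simp add: monoD)

lemma lam_pos: "0 < lam k"
  using lam_ge lam0 by (rule order.strict_trans2[rotated])

lemma Csum: "summable (\<lambda>k. (cc b k / lam k)\<^sup>2)"
proof -
  have "summable (\<lambda>k. (\<Sum>j\<in>UNIV. cmod (b j k) / lam k)\<^sup>2)"
    by (rule sum_sq_summable) (use bX in \<open>auto simp: Xm1_def power_divide\<close>)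
  then show ?thesis unfolding cc_def by (simp add: sum_divide_distrib)
qed

lemma w_le:
  assumes u: "u \<in> Linf" and t: "t \<ge> 0"
  shows "cmod (wint lam b t u k) \<le> linf_norm u * cc b k * ((1 - exp (- lam k * t)) / lam k)"
  unfolding wint_def
  by (rule w_bound[OF u t lam_pos cc_nonneg opB_bound])

lemma g_le_t: "(1 - exp (- lam k * t)) / lam k \<le> t"
proof -
  have "1 + (- lam k * t) \<le> exp (- lam k * t)" by (rule exp_ge_add_one_self)
  then show ?thesis using lam_pos[of k] by (simp add: divide_le_eq algebra_simps)
qed

lemma g_le_inv: "(1 - exp (- lam k * t)) / lam k \<le> 1 / lam k"
  using lam_pos[of k] by (simp add: divide_right_mono)

lemma g_nonneg: "t \<ge> 0 \<Longrightarrow> 0 \<le> (1 - exp (- lam k * t)) / lam k"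
  using lam_pos[of k] by (simp add: mult_nonneg_nonneg)

lemma iss_bound:
  assumes x: "x \<in> l2" and u: "u \<in> Linf" and t: "t \<ge> 0"
  shows "phi lam b t x u \<in> l2 \<and>
         l2norm (phi lam b t x u) \<le> exp (- lam 0 * t) * l2norm x + linf_norm u * sqrt (\<Sum>k. (cc b k / lam k)\<^sup>2)"
proof -
  define U where "U = linf_norm u"
  have U0: "U \<ge> 0" unfolding U_def by (rule linf_nonneg[OF u])
  define p where "p k = exp (- lam 0 * t) * cmod (x k)" for k
  define q where "q k = U * (cc b k / lam k)" for k
  have xs: "summable (\<lambda>k. (cmod (x k))\<^sup>2)" using x unfolding l2_def by simp
  have ps: "summable (\<lambda>k. (p k)\<^sup>2)" unfolding p_def power_mult_distrib
    by (intro summable_mult xs)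
  have qs: "summable (\<lambda>k. (q k)\<^sup>2)" unfolding q_def power_mult_distrib
    by (intro summable_mult Csum)
  have pw: "cmod (phi lam b t x u k) \<le> p k + q k" for k
  proof -
    have "cmod (phi lam b t x u k) \<le> exp (- lam k * t) * cmod (x k) + cmod (wint lam b t u k)"
      unfolding phi_eq by (rule order_trans[OF norm_triangle_ineq]) (simp add: norm_mult)
    also have "exp (- lam k * t) * cmod (x k) \<le> p k"
      unfolding p_def using lam_ge[of k] t
      by (intro mult_right_mono) (auto intro: mult_right_mono)
    also have "cmod (wint lam b t u k) \<le> q k"
    proof -
      have "cmod (wint lam b t u k) \<le> U * cc b k * ((1 - exp (- lam k * t)) / lam k)"
        using w_le[OF u t] U_def by simp
      also have "\<dots> \<le> U * cc b k * (1 / lam k)"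
        by (intro mult_left_mono g_le_inv mult_nonneg_nonneg U0 cc_nonneg)
      finally show ?thesis unfolding q_def by simp
    qed
    finally show ?thesis by simp
  qed
  have p0: "0 \<le> p k" "0 \<le> q k" for k
    unfolding p_def q_def using U0 cc_nonneg[of b k] lam_pos[of k] by auto
  have pw2: "(cmod (phi lam b t x u k))\<^sup>2 \<le> (p k + q k)\<^sup>2" for k
    using pw[of k] by (simp add: power_mono)
  have pqs: "summable (\<lambda>k. (p k + q k)\<^sup>2)" by (rule tri_sum(1)[OF ps qs])
  have phs: "summable (\<lambda>k. (cmod (phi lam b t x u k))\<^sup>2)"
    by (rule summable_comparison_test[OF _ pqs]) (use pw2 in auto)
  have "l2norm (phi lam b t x u) \<le> sqrt (\<Sum>k. (p k + q k)\<^sup>2)"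
    unfolding l2norm_def by (intro real_sqrt_le_mono suminf_le pw2 phs pqs)
  also have "\<dots> \<le> sqrt (\<Sum>k. (p k)\<^sup>2) + sqrt (\<Sum>k. (q k)\<^sup>2)" by (rule tri_sum(2)[OF ps qs])
  also have "sqrt (\<Sum>k. (p k)\<^sup>2) = exp (- lam 0 * t) * l2norm x"
    unfolding p_def power_mult_distrib l2norm_def using suminf_mult[OF xs, of "(exp (- lam 0 * t))\<^sup>2"]
    by (simp add: real_sqrt_mult)
  also have "sqrt (\<Sum>k. (q k)\<^sup>2) = U * sqrt (\<Sum>k. (cc b k / lam k)\<^sup>2)"
    unfolding q_def power_mult_distrib using suminf_mult[OF Csum, of "U\<^sup>2"] U0
    by (simp add: real_sqrt_mult)
  finally show ?thesis using phs unfolding l2_def U_def by simp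
qed

end



lemma tail_tendsto:
  fixes f :: "nat \<Rightarrow> real"
  assumes "summable f"
  shows "(\<lambda>n. \<Sum>k. if k < n then 0 else f k) \<longlonglongrightarrow> 0"
proof -
  have eq: "(\<Sum>k. if k < n then 0 else f k) = suminf f - (\<Sum>k<n. f k)" for n
  proof -
    have "(\<lambda>k. if k \<in> {..<n} then f k else 0) sums (\<Sum>k\<in>{..<n}. f k)"
      by (rule sums_If_finite_set) simp
    then have "(\<lambda>k. f k - (if k \<in> {..<n} then f k else 0)) sums (suminf f - (\<Sum>k<n. f k))"
      by (intro sums_diff summable_sums assms)
    moreover have "(\<lambda>k. f k - (if k \<in> {..<n} then f k else 0)) = (\<lambda>k. if k < n then 0 else f k)"
      by auto
    ultimately show ?thesis by (simp add: sums_iff)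
  qed
  have "(\<lambda>n. suminf f - (\<Sum>k<n. f k)) \<longlonglongrightarrow> suminf f - suminf f"
    by (intro tendsto_diff tendsto_const summable_LIMSEQ assms)
  then show ?thesis unfolding eq by simp
qed

context
  fixes lam :: "nat \<Rightarrow> real" and b :: "'m::finite \<Rightarrow> nat \<Rightarrow> complex"
  assumes lam0: "0 < lam 0" and smono: "strict_mono lam" and bX: "\<forall>j. b j \<in> Xm1 lam"
begin

lemma ISS_holds: "ISS lam b"
proof -
  define C where "C = (\<Sum>k. (cc b k / lam k)\<^sup>2)"
  have C0: "C \<ge> 0" unfolding C_def by (intro suminf_nonneg Csum[OF lam0 smono bX]) simp
  define \<beta> where "\<beta> = (\<lambda>r t. r * exp (- lam 0 * t))"
  define \<gamma> where "\<gamma> = (\<lambda>r. (sqrt C + 1) * r)"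
  have KL: "classKL \<beta>"
    unfolding classKL_def classK_def \<beta>_def
  proof (intro conjI allI impI)
    fix t :: real
    show "continuous_on {0..} (\<lambda>r. r * exp (- lam 0 * t))" by (intro continuous_intros)
    show "strict_mono_on {0..} (\<lambda>r. r * exp (- lam 0 * t))"
      by (auto simp: strict_mono_on_def)
    show "0 * exp (- lam 0 * t) = 0" by simp
  next
    fix r :: real assume r: "r > 0"
    show "continuous_on {0..} (\<lambda>t. r * exp (- lam 0 * t))" by (intro continuous_intros)
    fix s t :: real assume "0 \<le> s" "s < t"
    then show "r * exp (- lam 0 * t) < r * exp (- lam 0 * s)"
      using r lam0 by auto
  next
    fix r :: real assume r: "r > 0"
    show "((\<lambda>t. r * exp (- lam 0 * t)) \<longlongrightarrow> 0) at_top"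
      using lam0 by real_asymp
  qed
  have sC: "0 < sqrt C + 1" using C0 by (simp add: add_nonneg_pos)
  have K: "classK \<gamma>"
    unfolding classK_def \<gamma>_def using sC
    by (auto intro!: continuous_intros mult_strict_left_mono simp: strict_mono_on_def)
  show ?thesis
    unfolding ISS_def
  proof (intro exI conjI ballI allI impI)
    show "classKL \<beta>" by (rule KL)
    show "classK \<gamma>" by (rule K)
    fix x0 and u :: "real \<Rightarrow> complex^'m" and t :: real assume x0: "x0 \<in> l2" and u: "u \<in> Linf" and t: "0 \<le> t"
    note ib0 = iss_bound[OF lam0 smono bX]
    note ib1 = ib0[OF x0]
    note ib2 = ib1[OF u]
    note ib = ib2[OF t]
    show "phi lam b t x0 u \<in> l2" using ib by simp
    have U0: "0 \<le> linf_norm u" by (rule linf_nonneg[OF u])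
    have "linf_norm u * sqrt C \<le> (sqrt C + 1) * linf_norm u" using U0 by (simp add: algebra_simps)
    then show "l2norm (phi lam b t x0 u) \<le> \<beta> (l2norm x0) t + \<gamma> (linf_norm u)"
      using ib unfolding \<beta>_def \<gamma>_def C_def by (simp add: mult.commute)
  qed
qed

lemma inv_unique:
  assumes x: "x \<in> l2"
  shows "\<exists>!y. y \<in> domA lam \<and> opA lam y = x"
proof
  define y where "y = (\<lambda>k. - x k / complex_of_real (lam k))"
  have lp: "lam k > 0" for k by (rule lam_pos[OF lam0 smono bX])
  have lnz: "lam k \<noteq> 0" for k using lp[of k] by simp
  have xs: "summable (\<lambda>k. (cmod (x k))\<^sup>2)" using x unfolding l2_def by simp
  show "y \<in> domA lam \<and> opA lam y = x"
  proof
    show opy: "opA lam y = x"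
    proof (rule ext)
      fix k show "opA lam y k = x k"
        unfolding opA_def y_def using lp[of k] by (simp add: field_simps)
    qed
    have yl2: "y \<in> l2"
      unfolding l2_def
    proof (simp, rule summable_comparison_test[OF _ summable_divide[OF xs, of "(lam 0)\<^sup>2"]])
      show "\<exists>N. \<forall>n\<ge>N. norm ((cmod (y n))\<^sup>2) \<le> (cmod (x n))\<^sup>2 / (lam 0)\<^sup>2"
      proof (intro exI allI impI)
        fix n :: nat
        have "(cmod (y n))\<^sup>2 = (cmod (x n))\<^sup>2 / (lam n)\<^sup>2"
          unfolding y_def using lp[of n] by (simp add: norm_divide power_divide)
        also have "\<dots> \<le> (cmod (x n))\<^sup>2 / (lam 0)\<^sup>2"
          using lam_ge[OF lam0 smono bX, of n] lam0
          by (intro divide_left_mono power_mono mult_pos_pos) auto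
        finally show "norm ((cmod (y n))\<^sup>2) \<le> (cmod (x n))\<^sup>2 / (lam 0)\<^sup>2" by simp
      qed
    qed
    show "y \<in> domA lam"
      unfolding domA_def
    proof (intro CollectI conjI bexI[of _ x] yl2 x)
      have eq: "l2norm (\<lambda>k. (if k < n then - complex_of_real (lam k) * y k else 0) - x k)
          = sqrt (\<Sum>k. if k < n then 0 else (cmod (x k))\<^sup>2)" for n
        unfolding l2norm_def y_def using lp
        by (intro arg_cong[where f=sqrt] suminf_cong) (auto simp: lnz)
      show "(\<lambda>n. l2norm (\<lambda>k. (if k < n then - complex_of_real (lam k) * y k else 0) - x k)) \<longlonglongrightarrow> 0"
        unfolding eq using tendsto_real_sqrt[OF tail_tendsto[OF xs]] by simp
    qed
  qed
  fix z assume "z \<in> domA lam \<and> opA lam z = x"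
  then have "opA lam z = x" by simp
  then show "z = y"
  proof (intro ext)
    fix k assume "opA lam z = x"
    from fun_cong[OF this, of k] show "z k = y k"
      unfolding opA_def y_def using lnz[of k] by (auto simp: field_simps minus_equation_iff)
  qed
qed

lemma inner_formula:
  assumes x: "x \<in> l2" and y: "opA lam y = x"
  shows "- Re (l2inner y x) = (\<Sum>k. (cmod (x k))\<^sup>2 / lam k)"
proof -
  have lp: "lam k > 0" for k by (rule lam_pos[OF lam0 smono bX])
  have xs: "summable (\<lambda>k. (cmod (x k))\<^sup>2)" using x unfolding l2_def by simp
  have vs: "summable (\<lambda>k. (cmod (x k))\<^sup>2 / lam k)"
  proof (rule summable_comparison_test[OF _ summable_divide[OF xs, of "lam 0"]])
    show "\<exists>N. \<forall>n\<ge>N. norm ((cmod (x n))\<^sup>2 / lam n) \<le> (cmod (x n))\<^sup>2 / lam 0"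
    proof (intro exI[of _ 0] allI impI)
      fix n :: nat
      have "(cmod (x n))\<^sup>2 / lam n \<le> (cmod (x n))\<^sup>2 / lam 0"
        using lam_ge[OF lam0 smono bX, of n] lam0 lp[of n]
        by (intro divide_left_mono mult_pos_pos) auto
      then show "norm ((cmod (x n))\<^sup>2 / lam n) \<le> (cmod (x n))\<^sup>2 / lam 0"
        using lp[of n] by simp
    qed
  qed
  have yk: "y k = - x k / complex_of_real (lam k)" for k
    using fun_cong[OF y, of k] lp[of k] unfolding opA_def by (auto simp: field_simps minus_equation_iff)
  have "y k * cnj (x k) = - complex_of_real ((cmod (x k))\<^sup>2 / lam k)" for k
    unfolding yk using complex_norm_square[of "x k"] lp[of k] by (simp add: field_simps)
  then have "l2inner y x = (\<Sum>k. - complex_of_real ((cmod (x k))\<^sup>2 / lam k))"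
    unfolding l2inner_def by simp
  also have "\<dots> = - complex_of_real (\<Sum>k. (cmod (x k))\<^sup>2 / lam k)"
  proof -
    have "(\<lambda>k. complex_of_real ((cmod (x k))\<^sup>2 / lam k)) sums complex_of_real (\<Sum>k. (cmod (x k))\<^sup>2 / lam k)"
      by (subst sums_of_real_iff) (rule summable_sums[OF vs])
    then show ?thesis by (simp add: sums_iff suminf_minus)
  qed
  finally show ?thesis by simp
qed

end



lemma sq_diff_aux:
  fixes a c d :: real
  assumes "0 \<le> a" "0 \<le> c" "\<bar>c - a\<bar> \<le> d"
  shows "\<bar>c\<^sup>2 - a\<^sup>2\<bar> \<le> d\<^sup>2 + 2 * d * a"
proof -
  have "c\<^sup>2 - a\<^sup>2 = (c - a) * (c + a)"
    by (simp add: power2_eq_square algebra_simps)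
  then have "\<bar>c\<^sup>2 - a\<^sup>2\<bar> = \<bar>c - a\<bar> * (c + a)"
    using assms by (simp add: abs_mult)
  also have "\<dots> \<le> d * (2 * a + d)"
    using assms by (intro mult_mono) auto
  finally show ?thesis by (simp add: power2_eq_square algebra_simps)
qed

context
  fixes lam :: "nat \<Rightarrow> real" and b :: "'m::finite \<Rightarrow> nat \<Rightarrow> complex"
  assumes lam0: "0 < lam 0" and smono: "strict_mono lam" and bX: "\<forall>j. b j \<in> Xm1 lam"
begin

lemma lp: "0 < lam k" by (rule lam_pos[OF lam0 smono bX])
lemma lg: "lam 0 \<le> lam k" by (rule lam_ge[OF lam0 smono bX])

lemma V_summable:
  assumes "x \<in> l2"
  shows "summable (\<lambda>k. (cmod (x k))\<^sup>2 / lam k)"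
    and "(\<Sum>k. (cmod (x k))\<^sup>2 / lam k) \<le> (l2norm x)\<^sup>2 / lam 0"
proof -
  have xs: "summable (\<lambda>k. (cmod (x k))\<^sup>2)" using assms unfolding l2_def by simp
  have pw: "(cmod (x k))\<^sup>2 / lam k \<le> (cmod (x k))\<^sup>2 / lam 0" for k
    using lg[of k] lam0 lp[of k] by (intro divide_left_mono mult_pos_pos) auto
  show vs: "summable (\<lambda>k. (cmod (x k))\<^sup>2 / lam k)"
  proof (rule summable_comparison_test[OF _ summable_divide[OF xs, of "lam 0"]], intro exI[of _ 0] allI impI)
    fix n :: nat
    show "norm ((cmod (x n))\<^sup>2 / lam n) \<le> (cmod (x n))\<^sup>2 / lam 0"
      using pw[of n] lp[of n] by simp
  qed
  have "(\<Sum>k. (cmod (x k))\<^sup>2 / lam k) \<le> (\<Sum>k. (cmod (x k))\<^sup>2 / lam 0)"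
    by (rule suminf_le[OF pw vs summable_divide[OF xs, of "lam 0"]])
  also have "\<dots> = (l2norm x)\<^sup>2 / lam 0"
    using suminf_divide[OF xs, of "lam 0"] l2_sq[OF assms] by simp
  finally show "(\<Sum>k. (cmod (x k))\<^sup>2 / lam k) \<le> (l2norm x)\<^sup>2 / lam 0" .
qed

lemma V_cont:
  assumes x: "x \<in> l2" and e: "\<epsilon> > 0"
  shows "\<exists>\<delta>>0. \<forall>y\<in>l2. l2norm (\<lambda>k. y k - x k) < \<delta> \<longrightarrow>
           \<bar>(\<Sum>k. (cmod (y k))\<^sup>2 / lam k) - (\<Sum>k. (cmod (x k))\<^sup>2 / lam k)\<bar> < \<epsilon>"
proof -
  define X where "X = l2norm x"
  have X0: "X \<ge> 0" unfolding X_def by (rule l2norm_nonneg[OF x])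
  define \<delta> where "\<delta> = min 1 (\<epsilon> * lam 0 / (1 + 2 * X))"
  have d0: "\<delta> > 0" unfolding \<delta>_def using e lam0 X0 by auto
  show ?thesis
  proof (intro exI[of _ \<delta>] conjI d0 ballI impI)
    fix y assume y: "y \<in> l2" and yd: "l2norm (\<lambda>k. y k - x k) < \<delta>"
    define d where "d k = cmod (y k - x k)" for k
    define a where "a k = cmod (x k)" for k
    define D where "D = l2norm (\<lambda>k. y k - x k)"
    have xs: "summable (\<lambda>k. (a k)\<^sup>2)" using x unfolding l2_def a_def by simp
    have ys: "summable (\<lambda>k. (cmod (y k))\<^sup>2)" using y unfolding l2_def by simp
    have ds: "summable (\<lambda>k. (d k)\<^sup>2)"
    proof (rule summable_comparison_test[OF _ tri_sum(1)[OF ys xs]])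
      show "\<exists>N. \<forall>n\<ge>N. norm ((d n)\<^sup>2) \<le> (cmod (y n) + a n)\<^sup>2"
        unfolding d_def a_def by (auto intro!: power_mono norm_triangle_ineq4)
    qed
    have D2: "D\<^sup>2 = (\<Sum>k. (d k)\<^sup>2)"
      unfolding D_def d_def by (rule l2_sq) (use ds in \<open>simp add: l2_def d_def\<close>)
    have D0: "D \<ge> 0" unfolding D_def by (rule l2norm_nonneg) (use ds in \<open>simp add: l2_def d_def\<close>)
    have X2: "X\<^sup>2 = (\<Sum>k. (a k)\<^sup>2)" unfolding X_def a_def by (rule l2_sq[OF x])
    define g where "g k = ((d k)\<^sup>2 + 2 * (\<bar>d k\<bar> * \<bar>a k\<bar>)) / lam 0" for k
    have gs: "summable g" unfolding g_def
      by (intro summable_divide summable_add summable_mult ds cs_sum(1) xs)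
    have pw: "\<bar>(cmod (y k))\<^sup>2 / lam k - (cmod (x k))\<^sup>2 / lam k\<bar> \<le> g k" for k
    proof -
      have "\<bar>(cmod (y k))\<^sup>2 - (a k)\<^sup>2\<bar> \<le> (d k)\<^sup>2 + 2 * d k * a k"
        unfolding d_def a_def by (rule sq_diff_aux) (auto simp: norm_triangle_ineq3)
      then have "\<bar>(cmod (y k))\<^sup>2 - (a k)\<^sup>2\<bar> / lam k \<le> ((d k)\<^sup>2 + 2 * d k * a k) / lam 0"
        using lg[of k] lam0 lp[of k]
        by (intro frac_le) (auto simp: d_def a_def)
      moreover have "\<bar>(cmod (y k))\<^sup>2 / lam k - (cmod (x k))\<^sup>2 / lam k\<bar> = \<bar>(cmod (y k))\<^sup>2 - (a k)\<^sup>2\<bar> / lam k"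
        using lp[of k] by (simp add: a_def diff_divide_distrib[symmetric] abs_divide)
      ultimately show ?thesis unfolding g_def by (simp add: d_def a_def mult.assoc)
    qed
    have vx: "summable (\<lambda>k. (cmod (x k))\<^sup>2 / lam k)" by (rule V_summable(1)[OF x])
    have vy: "summable (\<lambda>k. (cmod (y k))\<^sup>2 / lam k)" by (rule V_summable(1)[OF y])
    have "\<bar>(\<Sum>k. (cmod (y k))\<^sup>2 / lam k) - (\<Sum>k. (cmod (x k))\<^sup>2 / lam k)\<bar>
        = \<bar>\<Sum>k. (cmod (y k))\<^sup>2 / lam k - (cmod (x k))\<^sup>2 / lam k\<bar>"
      by (simp add: suminf_diff[OF vy vx])
    also have "\<dots> \<le> (\<Sum>k. g k)"
    proof -
      have s1: "summable (\<lambda>k. (cmod (y k))\<^sup>2 / lam k - (cmod (x k))\<^sup>2 / lam k)"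
        by (intro summable_diff vx vy)
      have "(\<Sum>k. (cmod (y k))\<^sup>2 / lam k - (cmod (x k))\<^sup>2 / lam k) \<le> (\<Sum>k. g k)"
        by (rule suminf_le[OF _ s1 gs]) (use pw in \<open>auto simp: abs_le_iff\<close>)
      moreover have "- (\<Sum>k. (cmod (y k))\<^sup>2 / lam k - (cmod (x k))\<^sup>2 / lam k) \<le> (\<Sum>k. g k)"
        unfolding suminf_minus[OF s1, symmetric]
        by (rule suminf_le[OF _ summable_minus[OF s1] gs]) (use pw in \<open>auto simp: abs_le_iff\<close>)
      ultimately show ?thesis by linarith
    qed
    also have "(\<Sum>k. g k) = (D\<^sup>2 + 2 * (\<Sum>k. \<bar>d k\<bar> * \<bar>a k\<bar>)) / lam 0"
      unfolding g_def D2
      by (intro sums_unique[symmetric] sums_divide sums_add sums_mult summable_sums ds cs_sum(1) xs)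
    also have "\<dots> \<le> (D\<^sup>2 + 2 * (D * X)) / lam 0"
      using cs_sum(2)[OF ds xs] D2 X2 D0 X0 lam0
      by (intro divide_right_mono add_left_mono mult_left_mono) (auto simp: real_sqrt_unique)
    also have "\<dots> < \<epsilon>"
    proof -
      have Dd: "D < \<delta>" using yd D_def by simp
      have "D \<le> 1" using Dd unfolding \<delta>_def by simp
      then have "D\<^sup>2 + 2 * (D * X) \<le> D * (1 + 2 * X)"
        using D0 by (simp add: power2_eq_square algebra_simps mult_left_le_one_le)
      also have "\<dots> < \<delta> * (1 + 2 * X)" using Dd X0 by (intro mult_strict_right_mono) auto
      also have "\<dots> \<le> \<epsilon> * lam 0"
      proof -
        have "\<delta> \<le> \<epsilon> * lam 0 / (1 + 2 * X)" unfolding \<delta>_def by simp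
        then show ?thesis using X0 by (simp add: le_divide_eq)
      qed
      finally show ?thesis using lam0 by (simp add: divide_less_eq)
    qed
    finally show "\<bar>(\<Sum>k. (cmod (y k))\<^sup>2 / lam k) - (\<Sum>k. (cmod (x k))\<^sup>2 / lam k)\<bar> < \<epsilon>" .
  qed
qed

end



lemma exp_quot_lim:
  fixes l :: real assumes "l > 0"
  shows "((\<lambda>t. (exp (- 2 * l * t) - 1) / (l * t)) \<longlongrightarrow> - 2) (at_right 0)"
  using assms by real_asymp

lemma exp_quot_bound:
  fixes l t :: real assumes "l > 0" "t > 0"
  shows "\<bar>(exp (- 2 * l * t) - 1) / (l * t)\<bar> \<le> 2"
proof -
  have "1 + (- 2 * l * t) \<le> exp (- 2 * l * t)" by (rule exp_ge_add_one_self)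
  moreover have "exp (- 2 * l * t) \<le> 1" using assms by simp
  ultimately have "\<bar>exp (- 2 * l * t) - 1\<bar> \<le> 2 * (l * t)" by simp
  then show ?thesis using assms by (simp add: abs_divide divide_le_eq abs_of_pos)
qed

context
  fixes lam :: "nat \<Rightarrow> real" and b :: "'m::finite \<Rightarrow> nat \<Rightarrow> complex"
  assumes lam0: "0 < lam 0" and smono: "strict_mono lam" and bX: "\<forall>j. b j \<in> Xm1 lam"
begin

lemma termwise:
  fixes u :: "real \<Rightarrow> complex^'m"
  assumes u: "u \<in> Linf" and t: "t > 0"
  shows "((cmod (phi lam b t x u k))\<^sup>2 / lam k - (cmod (x k))\<^sup>2 / lam k) / t
     \<le> (exp (- 2 * lam k * t) - 1) / (lam k * t) * (cmod (x k))\<^sup>2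
        + 2 * (\<bar>cmod (x k)\<bar> * \<bar>linf_norm u * (cc b k / lam k)\<bar>)
        + (linf_norm u * (cc b k / lam k))\<^sup>2 * (1 - exp (- lam k * t))"
proof -
  define l where "l = lam k"
  have l: "l > 0" unfolding l_def by (rule lp[OF lam0 smono bX])
  define U where "U = linf_norm u"
  have U0: "U \<ge> 0" unfolding U_def by (rule linf_nonneg[OF u])
  define c where "c = cc b k"
  have c0: "c \<ge> 0" unfolding c_def by (rule cc_nonneg)
  define e where "e = exp (- l * t)"
  have e0: "0 < e" "e \<le> 1" unfolding e_def using l t by auto
  define g where "g = (1 - e) / l"
  have g0: "0 \<le> g" "g \<le> t" unfolding g_def e_def l_def
    using g_nonneg[OF lam0 smono bX, of t k] g_le_t[OF lam0 smono bX, of k t] t by auto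
  define W where "W = cmod (wint lam b t u k)"
  define a where "a = cmod (x k)"
  define P where "P = cmod (phi lam b t x u k)"
  have a0: "a \<ge> 0" unfolding a_def by simp
  have W0: "W \<ge> 0" unfolding W_def by simp
  have P0: "P \<ge> 0" unfolding P_def by simp
  have W: "W \<le> U * c * g"
    unfolding W_def U_def c_def g_def e_def l_def using w_le[OF lam0 smono bX u, of t k] t by simp
  have Wt: "W \<le> U * c * t"
    using W g0 U0 c0 by (meson mult_left_mono mult_nonneg_nonneg order_trans)
  have W2: "W\<^sup>2 \<le> (U * c)\<^sup>2 * g * t"
  proof -
    have "W\<^sup>2 \<le> (U * c * g)\<^sup>2" using W W0 by (intro power_mono) auto
    also have "\<dots> = (U * c)\<^sup>2 * g * g" by (simp add: power2_eq_square)
    also have "\<dots> \<le> (U * c)\<^sup>2 * g * t" using g0 by (intro mult_left_mono) auto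
    finally show ?thesis .
  qed
  have P: "P \<le> e * a + W"
    unfolding P_def phi_eq W_def e_def a_def l_def
    by (rule order_trans[OF norm_triangle_ineq]) (simp add: norm_mult)
  have P2: "P\<^sup>2 \<le> e\<^sup>2 * a\<^sup>2 + 2 * (e * a * W) + W\<^sup>2"
  proof -
    have "P\<^sup>2 \<le> (e * a + W)\<^sup>2" using P P0 by (intro power_mono) auto
    then show ?thesis by (simp add: power2_eq_square algebra_simps)
  qed
  have lt: "l * t > 0" using l t by simp
  have "(P\<^sup>2 / l - a\<^sup>2 / l) / t = (P\<^sup>2 - a\<^sup>2) / (l * t)"
    using l t by (simp add: field_simps)
  also have "\<dots> \<le> (e\<^sup>2 * a\<^sup>2 + 2 * (e * a * W) + W\<^sup>2 - a\<^sup>2) / (l * t)"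
    using P2 lt by (intro divide_right_mono) auto
  also have "\<dots> = (e\<^sup>2 - 1) / (l * t) * a\<^sup>2 + 2 * (e * a * W) / (l * t) + W\<^sup>2 / (l * t)"
    by (simp add: add_divide_distrib diff_divide_distrib algebra_simps)
  also have "2 * (e * a * W) / (l * t) \<le> 2 * (a * (U * (c / l)))"
  proof -
    have "e * a * W \<le> 1 * a * (U * c * t)"
      using e0 a0 W0 Wt by (intro mult_mono) auto
    then have "2 * (e * a * W) / (l * t) \<le> 2 * (a * (U * c * t)) / (l * t)"
      using lt by (intro divide_right_mono) auto
    also have "\<dots> = 2 * (a * (U * (c / l)))" using l t by (simp add: field_simps)
    finally show ?thesis .
  qed
  also have "W\<^sup>2 / (l * t) \<le> (U * (c / l))\<^sup>2 * (1 - e)"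
  proof -
    have "W\<^sup>2 / (l * t) \<le> (U * c)\<^sup>2 * g * t / (l * t)"
      using W2 lt by (intro divide_right_mono) auto
    also have "\<dots> = (U * (c / l))\<^sup>2 * (1 - e)"
      unfolding g_def using l t by (simp add: field_simps power2_eq_square)
    finally show ?thesis .
  qed
  also have "e\<^sup>2 = exp (- 2 * l * t)"
    unfolding e_def by (simp add: power2_eq_square exp_add[symmetric])
  finally show ?thesis
    unfolding P_def a_def U_def c_def e_def l_def using linf_nonneg[OF u] cc_nonneg[of b k] lp[OF lam0 smono bX, of k]
    by (simp add: abs_mult)
qed

end



context
  fixes lam :: "nat \<Rightarrow> real" and b :: "'m::finite \<Rightarrow> nat \<Rightarrow> complex"
  assumes lam0: "0 < lam 0" and smono: "strict_mono lam" and bX: "\<forall>j. b j \<in> Xm1 lam"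
begin

lemma Vdot_bound:
  fixes u :: "real \<Rightarrow> complex^'m"
  assumes x: "x \<in> l2" and u: "u \<in> Linf"
  shows "Limsup (at_right 0) (\<lambda>t. ereal (((\<Sum>k. (cmod (phi lam b t x u k))\<^sup>2 / lam k)
            - (\<Sum>k. (cmod (x k))\<^sup>2 / lam k)) / t))
         \<le> ereal (- (l2norm x)\<^sup>2 + ((\<Sum>k. (cc b k / lam k)\<^sup>2) + 1) * (linf_norm u)\<^sup>2)"
proof -
  define U where "U = linf_norm u"
  have U0: "U \<ge> 0" unfolding U_def by (rule linf_nonneg[OF u])
  define C where "C = (\<Sum>k. (cc b k / lam k)\<^sup>2)"
  have Cs: "summable (\<lambda>k. (cc b k / lam k)\<^sup>2)" by (rule Csum[OF lam0 smono bX])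
  define a where "a k = cmod (x k)" for k
  define q where "q k = U * (cc b k / lam k)" for k
  define a1 where "a1 k t = (exp (- 2 * lam k * t) - 1) / (lam k * t) * (a k)\<^sup>2" for k t
  define a3 where "a3 k t = (q k)\<^sup>2 * (1 - exp (- lam k * t))" for k t
  define K where "K = (\<Sum>k. 2 * (\<bar>a k\<bar> * \<bar>q k\<bar>))"
  define X where "X = l2norm x"
  have xs: "summable (\<lambda>k. (a k)\<^sup>2)" using x unfolding l2_def a_def by simp
  have X2: "X\<^sup>2 = (\<Sum>k. (a k)\<^sup>2)" unfolding X_def a_def by (rule l2_sq[OF x])
  have qs: "summable (\<lambda>k. (q k)\<^sup>2)" unfolding q_def power_mult_distrib
    by (intro summable_mult Cs)
  have qsum: "(\<Sum>k. (q k)\<^sup>2) = U\<^sup>2 * C" unfolding q_def power_mult_distrib C_def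
    by (rule suminf_mult[OF Cs])
  have Ks: "summable (\<lambda>k. 2 * (\<bar>a k\<bar> * \<bar>q k\<bar>))" by (intro summable_mult cs_sum(1) xs qs)
  have lpk: "0 < lam k" for k by (rule lp[OF lam0 smono bX])
  have F: "at_right (0::real) \<noteq> bot" by (simp add: trivial_limit_def[symmetric])
  have ev_pos: "eventually (\<lambda>t::real. t > 0) (at_right 0)" by (rule eventually_at_right_less)
  have prod_ev: "eventually (\<lambda>(k, t). P k t) (at_top \<times>\<^sub>F at_right 0)"
    if "\<And>k t. t > 0 \<Longrightarrow> P k t" for P :: "nat \<Rightarrow> real \<Rightarrow> bool"
    unfolding eventually_prod_filter
    by (intro exI[of _ "\<lambda>_. True"] exI[of _ "\<lambda>t. t > 0"]) (use ev_pos that in auto)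
  have a1b: "norm (a1 k t) \<le> 2 * (a k)\<^sup>2" if "t > 0" for k t
  proof -
    have "\<bar>(exp (- 2 * lam k * t) - 1) / (lam k * t)\<bar> * (a k)\<^sup>2 \<le> 2 * (a k)\<^sup>2"
      by (rule mult_right_mono[OF exp_quot_bound[OF lpk that]]) simp
    then show ?thesis unfolding a1_def real_norm_def abs_mult by simp
  qed
  have a3b: "norm (a3 k t) \<le> (q k)\<^sup>2" if "t > 0" for k t
    unfolding a3_def using lpk[of k] that
    by (simp add: abs_mult mult_left_le)
  have T1: "((\<lambda>t. \<Sum>k. a1 k t) \<longlongrightarrow> (\<Sum>k. - 2 * (a k)\<^sup>2)) (at_right 0)"
  proof -
    have "eventually (\<lambda>t. summable (\<lambda>k. norm (a1 k t))) (at_right 0) \<and>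
          summable (\<lambda>n. norm (- 2 * (a n)\<^sup>2)) \<and>
          ((\<lambda>t. \<Sum>k. a1 k t) \<longlongrightarrow> (\<Sum>k. - 2 * (a k)\<^sup>2)) (at_right 0)"
    proof (rule tannerys_theorem[where M = "\<lambda>k. 2 * (a k)\<^sup>2"])
      fix k
      show "((\<lambda>t. a1 k t) \<longlongrightarrow> - 2 * (a k)\<^sup>2) (at_right 0)"
        unfolding a1_def by (intro tendsto_mult_right exp_quot_lim lpk)
    next
      show "eventually (\<lambda>(k, t). norm (a1 k t) \<le> 2 * (a k)\<^sup>2) (at_top \<times>\<^sub>F at_right 0)"
        by (rule prod_ev) (rule a1b)
    qed (use xs F in auto)
    then show ?thesis by simp
  qed
  have T3: "((\<lambda>t. \<Sum>k. a3 k t) \<longlongrightarrow> (\<Sum>k. (0::real))) (at_right 0)"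
  proof -
    have "eventually (\<lambda>t. summable (\<lambda>k. norm (a3 k t))) (at_right 0) \<and>
          summable (\<lambda>n. norm (0::real)) \<and>
          ((\<lambda>t. \<Sum>k. a3 k t) \<longlongrightarrow> (\<Sum>k. (0::real))) (at_right 0)"
    proof (rule tannerys_theorem[where M = "\<lambda>k. (q k)\<^sup>2"])
      fix k
      have "((\<lambda>t. a3 k t) \<longlongrightarrow> (q k)\<^sup>2 * (1 - exp (- lam k * 0))) (at_right 0)"
        unfolding a3_def by (intro tendsto_intros)
      then show "((\<lambda>t. a3 k t) \<longlongrightarrow> 0) (at_right 0)" by simp
    next
      show "eventually (\<lambda>(k, t). norm (a3 k t) \<le> (q k)\<^sup>2) (at_top \<times>\<^sub>F at_right 0)"
        by (rule prod_ev) (rule a3b)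
    qed (use qs F in auto)
    then show ?thesis by simp
  qed
  define G where "G t = (\<Sum>k. a1 k t) + K + (\<Sum>k. a3 k t)" for t
  have GL: "(G \<longlongrightarrow> - 2 * X\<^sup>2 + K + 0) (at_right 0)"
  proof -
    have "(\<Sum>k. - 2 * (a k)\<^sup>2) = - 2 * X\<^sup>2" unfolding X2 by (rule suminf_mult[OF xs])
    then have T1': "((\<lambda>t. \<Sum>k. a1 k t) \<longlongrightarrow> - 2 * X\<^sup>2) (at_right 0)" using T1 by simp
    have T3': "((\<lambda>t. \<Sum>k. a3 k t) \<longlongrightarrow> 0) (at_right 0)" using T3 by simp
    show ?thesis unfolding G_def by (intro tendsto_add T1' T3' tendsto_const)
  qed
  have quot_le: "((\<Sum>k. (cmod (phi lam b t x u k))\<^sup>2 / lam k) - (\<Sum>k. (cmod (x k))\<^sup>2 / lam k)) / t \<le> G t"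
    if t: "t > 0" for t
  proof -
    have a1s: "summable (\<lambda>k. a1 k t)"
      by (rule summable_comparison_test[OF _ summable_mult[OF xs, of 2]]) (use a1b[OF t] in auto)
    have a3s: "summable (\<lambda>k. a3 k t)"
      by (rule summable_comparison_test[OF _ qs]) (use a3b[OF t] in auto)
    have phl2: "phi lam b t x u \<in> l2" using iss_bound[OF lam0 smono bX x u] t by simp
    have vp: "summable (\<lambda>k. (cmod (phi lam b t x u k))\<^sup>2 / lam k)"
      by (rule V_summable(1)[OF lam0 smono bX phl2])
    have vx: "summable (\<lambda>k. (cmod (x k))\<^sup>2 / lam k)"
      by (rule V_summable(1)[OF lam0 smono bX x])
    have ds: "summable (\<lambda>k. ((cmod (phi lam b t x u k))\<^sup>2 / lam k - (cmod (x k))\<^sup>2 / lam k) / t)"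
      by (intro summable_divide summable_diff vp vx)
    have "((\<Sum>k. (cmod (phi lam b t x u k))\<^sup>2 / lam k) - (\<Sum>k. (cmod (x k))\<^sup>2 / lam k)) / t
        = (\<Sum>k. ((cmod (phi lam b t x u k))\<^sup>2 / lam k - (cmod (x k))\<^sup>2 / lam k) / t)"
      by (simp add: suminf_diff[OF vp vx] suminf_divide[OF summable_diff[OF vp vx]])
    also have "\<dots> \<le> (\<Sum>k. a1 k t + 2 * (\<bar>a k\<bar> * \<bar>q k\<bar>) + a3 k t)"
    proof (rule suminf_le[OF _ ds])
      fix k
      show "((cmod (phi lam b t x u k))\<^sup>2 / lam k - (cmod (x k))\<^sup>2 / lam k) / t
          \<le> a1 k t + 2 * (\<bar>a k\<bar> * \<bar>q k\<bar>) + a3 k t"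
        unfolding a1_def a3_def a_def q_def U_def by (rule termwise[OF lam0 smono bX u t])
    qed (intro summable_add a1s a3s Ks)
    also have "\<dots> = G t"
      unfolding G_def K_def by (intro sums_unique[symmetric] sums_add summable_sums a1s a3s Ks)
    finally show ?thesis .
  qed
  have "Limsup (at_right 0) (\<lambda>t. ereal (((\<Sum>k. (cmod (phi lam b t x u k))\<^sup>2 / lam k)
            - (\<Sum>k. (cmod (x k))\<^sup>2 / lam k)) / t))
        \<le> Limsup (at_right 0) (\<lambda>t. ereal (G t))"
    by (rule Limsup_mono) (use ev_pos in \<open>auto elim!: eventually_mono intro: quot_le\<close>)
  also have "\<dots> = ereal (- 2 * X\<^sup>2 + K + 0)"
    by (rule lim_imp_Limsup) (use GL in auto)
  also have "- 2 * X\<^sup>2 + K + 0 \<le> - (l2norm x)\<^sup>2 + (C + 1) * (linf_norm u)\<^sup>2"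
  proof -
    have pw: "2 * (\<bar>a k\<bar> * \<bar>q k\<bar>) \<le> (a k)\<^sup>2 + (q k)\<^sup>2" for k
    proof -
      have "0 \<le> (\<bar>a k\<bar> - \<bar>q k\<bar>)\<^sup>2" by simp
      then show ?thesis by (simp add: power2_eq_square algebra_simps)
    qed
    have "K \<le> (\<Sum>k. (a k)\<^sup>2 + (q k)\<^sup>2)"
      unfolding K_def by (rule suminf_le[OF pw Ks summable_add[OF xs qs]])
    also have "\<dots> = X\<^sup>2 + U\<^sup>2 * C" unfolding X2 qsum[symmetric] by (rule suminf_add[OF xs qs, symmetric])
    finally have "K \<le> X\<^sup>2 + U\<^sup>2 * C" .
    moreover have "U\<^sup>2 * C \<le> (C + 1) * U\<^sup>2" by (simp add: algebra_simps)
    ultimately show ?thesis unfolding X_def U_def by simp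
  qed
  finally show ?thesis unfolding C_def by simp
qed

end



lemma Kinf_sq:
  fixes c :: real assumes c: "c > 0"
  shows "classKinf (\<lambda>r. c * r\<^sup>2)"
  unfolding classKinf_def classK_def
proof (intro conjI allI)
  show "continuous_on {0..} (\<lambda>r. c * r\<^sup>2)" by (intro continuous_intros)
  show "strict_mono_on {0..} (\<lambda>r. c * r\<^sup>2)"
    unfolding strict_mono_on_def using c by (auto intro!: mult_strict_left_mono power_strict_mono)
  show "c * 0\<^sup>2 = 0" by simp
  fix M :: real
  define r where "r = \<bar>M\<bar> / c + 1"
  have r1: "r \<ge> 1" unfolding r_def using c by simp
  have "c * r \<le> c * r\<^sup>2" using r1 c by (intro mult_left_mono) (auto simp: power2_eq_square)
  moreover have "c * r = \<bar>M\<bar> + c" unfolding r_def using c by (simp add: field_simps)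
  ultimately have "M < c * r\<^sup>2" using c by linarith
  then show "\<exists>r\<ge>0. M < c * r\<^sup>2" using r1 by (intro exI[of _ r]) auto
qed

theorem mainTheorem17:
  fixes lam :: "nat \<Rightarrow> real"
    and b :: "'m::finite \<Rightarrow> nat \<Rightarrow> complex"
  assumes "0 < lam 0"
    and "strict_mono lam"
    and "filterlim lam at_top sequentially"
    and "\<forall>j. b j \<in> Xm1 lam"
  shows "ISS lam b
    \<and> (\<forall>x\<in>l2. \<exists>!y. y \<in> domA lam \<and> opA lam y = x)
    \<and> (\<forall>x\<in>l2. \<forall>y. y \<in> domA lam \<and> opA lam y = x \<longrightarrow>
          - Re (l2inner y x) = (\<Sum>k. (cmod (x k))\<^sup>2 / lam k))
    \<and> ncISS_LF lam b (\<lambda>x. \<Sum>k. (cmod (x k))\<^sup>2 / lam k)"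
proof (intro conjI ballI allI impI)
  note A = assms(1,2,4)
  show "ISS lam b" by (rule ISS_holds[OF A])
  fix x assume x: "x \<in> l2"
  show "\<exists>!y. y \<in> domA lam \<and> opA lam y = x" by (rule inv_unique[OF A x])
next
  note A = assms(1,2,4)
  fix x y assume x: "x \<in> l2" and y: "y \<in> domA lam \<and> opA lam y = x"
  show "- Re (l2inner y x) = (\<Sum>k. (cmod (x k))\<^sup>2 / lam k)"
    using inner_formula[OF A x] y by simp
next
  note A = assms(1,2,4)
  define C where "C = (\<Sum>k. (cc b k / lam k)\<^sup>2)"
  have C0: "C \<ge> 0" unfolding C_def by (intro suminf_nonneg Csum[OF A]) simp
  show "ncISS_LF lam b (\<lambda>x. \<Sum>k. (cmod (x k))\<^sup>2 / lam k)"
    unfolding ncISS_LF_def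
  proof (intro conjI ballI allI impI)
    fix x :: "nat \<Rightarrow> complex" assume x: "x \<in> l2"
    show "0 \<le> (\<Sum>k. (cmod (x k))\<^sup>2 / lam k)"
      using V_summable(1)[OF A x] by (rule suminf_nonneg) (use lp[OF A] in \<open>auto intro: less_imp_le divide_nonneg_pos\<close>)
  next
    fix x :: "nat \<Rightarrow> complex" and \<epsilon> :: real assume x: "x \<in> l2" and e: "0 < \<epsilon>"
    show "\<exists>\<delta>>0. \<forall>y\<in>l2. l2norm (\<lambda>k. y k - x k) < \<delta> \<longrightarrow>
          \<bar>(\<Sum>k. (cmod (y k))\<^sup>2 / lam k) - (\<Sum>k. (cmod (x k))\<^sup>2 / lam k)\<bar> < \<epsilon>"
      by (rule V_cont[OF A x e])
  next
    show "\<exists>\<psi>2 \<alpha> \<sigma>. classKinf \<psi>2 \<and> classKinf \<alpha> \<and> classK \<sigma> \<and>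
        (\<forall>x\<in>l2. x \<noteq> (\<lambda>k. 0) \<longrightarrow> 0 < (\<Sum>k. (cmod (x k))\<^sup>2 / lam k) \<and>
             (\<Sum>k. (cmod (x k))\<^sup>2 / lam k) \<le> \<psi>2 (l2norm x)) \<and>
        (\<forall>x\<in>l2. \<forall>u\<in>(Linf :: (real \<Rightarrow> complex^'m) set).
            Vdot lam b (\<lambda>x. \<Sum>k. (cmod (x k))\<^sup>2 / lam k) u x \<le> ereal (- \<alpha> (l2norm x) + \<sigma> (linf_norm u)))"
    proof (intro exI conjI ballI impI)
      show "classKinf (\<lambda>r. (1 / lam 0) * r\<^sup>2)" by (rule Kinf_sq) (use A in simp)
      show "classKinf (\<lambda>r. 1 * r\<^sup>2)" by (rule Kinf_sq) simp
      show "classK (\<lambda>r. (C + 1) * r\<^sup>2)" using Kinf_sq[of "C + 1"] C0 by (simp add: classKinf_def)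
    next
      fix x :: "nat \<Rightarrow> complex" assume x: "x \<in> l2" and nz: "x \<noteq> (\<lambda>k. 0)"
      obtain i where i: "x i \<noteq> 0" using nz by auto
      show "0 < (\<Sum>k. (cmod (x k))\<^sup>2 / lam k)"
        by (rule suminf_pos2[OF V_summable(1)[OF A x], of i])
           (use lp[OF A] i in \<open>auto intro: less_imp_le divide_nonneg_pos\<close>)
      show "(\<Sum>k. (cmod (x k))\<^sup>2 / lam k) \<le> 1 / lam 0 * (l2norm x)\<^sup>2"
        using V_summable(2)[OF A x] by simp
    next
      fix x :: "nat \<Rightarrow> complex" and u :: "real \<Rightarrow> complex^'m" assume x: "x \<in> l2" and u: "u \<in> Linf"
      show "Vdot lam b (\<lambda>x. \<Sum>k. (cmod (x k))\<^sup>2 / lam k) u x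
          \<le> ereal (- (1 * (l2norm x)\<^sup>2) + (C + 1) * (linf_norm u)\<^sup>2)"
        unfolding Vdot_def C_def using Vdot_bound[OF A x u] by simp
    qed
  qed
qed


end
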